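(* If the Cartesian product $\prod_{\alpha\in\Lambda}X_\alpha$ (with the product topology) is locally Menger, then $X_\alpha$ is Menger for all but finitely many $\alpha\in\Lambda$.
   Context: A space $X$ is Menger if for each sequence $(\mathcal{U}_n)$ of open covers of $X$ there is a sequence $(\mathcal{V}_n)$ with each $\mathcal{V}_n$ a finite subset of $\mathcal{U}_n$ and $\bigcup_{n}\bigcup\mathcal{V}_n=X$. A space $X$ is locally Menger if for each $x\in X$ there exist an open set $U$ and a Menger subspace $Y$ of $X$ with $x\in U\subseteq Y$. *)

theory Defs
  imports "HOL-Analysis.Analysis"
begin

definition menger_space :: "'a topology \<Rightarrow> bool" where
  "menger_space X \<longleftrightarrow>
     (\<forall>\<U> :: nat \<Rightarrow> 'a set set.
        (\<forall>n. (\<forall>U\<in>\<U> n. openin X U) \<and> topspace X \<subseteq> \<Union>(\<U> n)) \<longrightarrow>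
        (\<exists>\<V> :: nat \<Rightarrow> 'a set set.
           (\<forall>n. finite (\<V> n) \<and> \<V> n \<subseteq> \<U> n) \<and>
           topspace X \<subseteq> (\<Union>n. \<Union>(\<V> n))))"

definition locally_menger_space :: "'a topology \<Rightarrow> bool" where
  "locally_menger_space X \<longleftrightarrow>
     (\<forall>x\<in>topspace X. \<exists>U Y. openin X U \<and> x \<in> U \<and> U \<subseteq> Y \<and> Y \<subseteq> topspace X \<and>
        menger_space (subtopology X Y))"

end

theory Submission
  imports Defs
begin

lemma menger_image:
  assumes m: "menger_space Y" and c: "continuous_map Y Z f"
    and s: "f ` topspace Y = topspace Z"
  shows "menger_space Z"
  unfolding menger_space_def
proof (intro allI impI)
  fix \<U> :: "nat \<Rightarrow> 'b set set"
  assume h: "\<forall>n. (\<forall>U\<in>\<U> n. openin Z U) \<and> topspace Z \<subseteq> \<Union>(\<U> n)"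
  define \<U>' where "\<U>' n = (\<lambda>U. topspace Y \<inter> f -` U) ` \<U> n" for n
  have "\<forall>n. (\<forall>U\<in>\<U>' n. openin Y U) \<and> topspace Y \<subseteq> \<Union>(\<U>' n)"
  proof
    fix n
    show "(\<forall>U\<in>\<U>' n. openin Y U) \<and> topspace Y \<subseteq> \<Union>(\<U>' n)"
    proof
      show "\<forall>U\<in>\<U>' n. openin Y U"
      proof
        fix V assume "V \<in> \<U>' n"
        then obtain U where "U \<in> \<U> n" "V = topspace Y \<inter> f -` U" unfolding \<U>'_def by blast
        moreover have "topspace Y \<inter> f -` U = {y \<in> topspace Y. f y \<in> U}" by blast
        ultimately show "openin Y V" using h openin_continuous_map_preimage[OF c] by metis
      qed
      show "topspace Y \<subseteq> \<Union>(\<U>' n)"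
      proof
        fix y assume y: "y \<in> topspace Y"
        then have "f y \<in> topspace Z" using s by blast
        then obtain U where "U \<in> \<U> n" "f y \<in> U" using h by blast
        then show "y \<in> \<Union>(\<U>' n)" using y unfolding \<U>'_def by blast
      qed
    qed
  qed
  then obtain \<V>' where V': "\<forall>n. finite (\<V>' n) \<and> \<V>' n \<subseteq> \<U>' n"
    "topspace Y \<subseteq> (\<Union>n. \<Union>(\<V>' n))"
    using m unfolding menger_space_def by meson
  define g where "g n V = (SOME U. U \<in> \<U> n \<and> V = topspace Y \<inter> f -` U)" for n V
  have g: "g n V \<in> \<U> n \<and> V = topspace Y \<inter> f -` g n V" if "V \<in> \<U>' n" for n V
    unfolding g_def by (rule someI_ex) (use that in \<open>auto simp: \<U>'_def\<close>)
  show "\<exists>\<V>. (\<forall>n. finite (\<V> n) \<and> \<V> n \<subseteq> \<U> n) \<and> topspace Z \<subseteq> (\<Union>n. \<Union>(\<V> n))"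
  proof (intro exI conjI allI)
    fix n
    show "finite (g n ` \<V>' n)" using V' by auto
    show "g n ` \<V>' n \<subseteq> \<U> n" using V' g by blast
  next
    show "topspace Z \<subseteq> (\<Union>n. \<Union>(g n ` \<V>' n))"
    proof
      fix z assume "z \<in> topspace Z"
      then obtain y where y: "y \<in> topspace Y" "z = f y" using s by blast
      then obtain n V where "V \<in> \<V>' n" "y \<in> V" using V' by blast
      then have "y \<in> topspace Y \<inter> f -` g n V" using g V' by blast
      then show "z \<in> (\<Union>n. \<Union>(g n ` \<V>' n))" using y \<open>V \<in> \<V>' n\<close> by blast
    qed
  qed
qed

theorem proposition4p4:
  fixes X :: "'i \<Rightarrow> 'a topology" and \<Lambda> :: "'i set"
  assumes nonempty: "\<And>\<alpha>. \<alpha> \<in> \<Lambda> \<Longrightarrow> topspace (X \<alpha>) \<noteq> {}"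
    and "locally_menger_space (product_topology X \<Lambda>)"
  shows "finite {\<alpha> \<in> \<Lambda>. \<not> menger_space (X \<alpha>)}"
proof -
  let ?P = "product_topology X \<Lambda>"
  have "topspace ?P \<noteq> {}"
    using nonempty by (auto simp: topspace_product_topology PiE_eq_empty_iff)
  then obtain x where x: "x \<in> topspace ?P" by blast
  then obtain W Y where W: "openin ?P W" "x \<in> W" "W \<subseteq> Y" "Y \<subseteq> topspace ?P"
    "menger_space (subtopology ?P Y)"
    using assms(2) unfolding locally_menger_space_def by meson
  then obtain U where U: "finite {i \<in> \<Lambda>. U i \<noteq> topspace (X i)}"
    "\<forall>i \<in> \<Lambda>. openin (X i) (U i)" "x \<in> Pi\<^sub>E \<Lambda> U" "Pi\<^sub>E \<Lambda> U \<subseteq> W"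
    unfolding openin_product_topology_alt by meson
  have "{\<alpha> \<in> \<Lambda>. \<not> menger_space (X \<alpha>)} \<subseteq> {i \<in> \<Lambda>. U i \<noteq> topspace (X i)}"
  proof (rule subsetI, rule ccontr)
    fix a assume a: "a \<in> {\<alpha> \<in> \<Lambda>. \<not> menger_space (X \<alpha>)}"
      and na: "a \<notin> {i \<in> \<Lambda>. U i \<noteq> topspace (X i)}"
    then have aL: "a \<in> \<Lambda>" and Ua: "U a = topspace (X a)" by auto
    have c: "continuous_map (subtopology ?P Y) (X a) (\<lambda>f. f a)"
      by (rule continuous_map_from_subtopology) (rule continuous_map_product_projection[OF aL])
    have "(\<lambda>f. f a) ` topspace (subtopology ?P Y) = topspace (X a)"
    proof
      show "(\<lambda>f. f a) ` topspace (subtopology ?P Y) \<subseteq> topspace (X a)"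
        using c by (auto simp: continuous_map_def)
      show "topspace (X a) \<subseteq> (\<lambda>f. f a) ` topspace (subtopology ?P Y)"
      proof
        fix t assume t: "t \<in> topspace (X a)"
        have "x(a := t) \<in> Pi\<^sub>E \<Lambda> U" using U(3) t Ua aL by (auto simp: PiE_def extensional_def)
        then have "x(a := t) \<in> topspace (subtopology ?P Y)"
        proof -
          have "x(a := t) \<in> Y" using subsetD[OF W(3) subsetD[OF U(4) \<open>x(a := t) \<in> Pi\<^sub>E \<Lambda> U\<close>]] .
          moreover have "x(a := t) \<in> topspace ?P" using W(4) \<open>x(a := t) \<in> Y\<close> by (rule subsetD)
          ultimately show ?thesis unfolding topspace_subtopology by (rule IntI[rotated])
        qed
        then show "t \<in> (\<lambda>f. f a) ` topspace (subtopology ?P Y)" by (rule rev_image_eqI) simp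
      qed
    qed
    then have "menger_space (X a)" using menger_image[OF W(5) c] by blast
    then show False using a by auto
  qed
  then show ?thesis using U(1) finite_subset by blast
qed

end
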